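(* Let $k\ge1$ and $\lambda$ a positive integer. For each $N$, consider the discrete-time Markov chain on $N$ blocks, each in a state in $\{0,1,\dots,k\}$, in which in each time slot $\lambda$ requests arrive; each request selects one of the $N$ blocks uniformly at random and, if the selected block is in state $i$, moves it to state $i+1$ with probability $(k-i)/k$ or to state $i-1$ with probability $i/k$. Let $\mathbf{M}^N(t)=(M_0(t),\dots,M_k(t))$ with $M_i(t)$ the fraction of blocks in state $i$ at slot $t$, and define the rescaled process $\widetilde{\mathbf{M}}^N$ by $\widetilde{\mathbf{M}}^N(t/N)=\mathbf{M}^N(t)$ (with $\varepsilon(N)=1/N$). If $\mathbf{M}^N(0)\to\mathbf{m}$ in probability as $N\to\infty$, then for every $T>0$, $\sup_{0\le t\le T}\|\widetilde{\mathbf{M}}^N(t)-\mathbf{s}(t)\|\to0$ in probability, where $\mathbf{s}(t)$ is the solution with $\mathbf{s}(0)=\mathbf{m}$ of $$\frac{ds_i}{dt}=-\lambda s_i+\lambda\frac{k-i+1}{k}s_{i-1}+\lambda\frac{i+1}{k}s_{i+1}\ (1\le i\le k-1),\quad \frac{ds_0}{dt}=-\lambda s_0+\frac{\lambda}{k}s_1,\quad \frac{ds_k}{dt}=-\lambda s_k+\frac{\lambda}{k}s_{k-1}.$$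
   Context: The blocks model an SSD with $N$ blocks of $k$ pages each under a uniform workload; the state of a block is its number of valid pages, a program request increasing it by one and an invalidate request decreasing it by one. $\mathbf{m}$ is a probability vector on $\{0,\dots,k\}$. *)

theory Defs
  imports "HOL-Probability.Probability"
begin

text \<open>Configurations of the SSD: a list of length N whose j-th entry is the
number of valid pages (state in 0..k) of block j.\<close>

definition request :: "nat \<Rightarrow> nat \<Rightarrow> nat list \<Rightarrow> nat list pmf" where
  "request N k xs =
     bind_pmf (pmf_of_set {..<N}) (\<lambda>j.
     map_pmf (\<lambda>up. xs[j := (if up then xs ! j + 1 else xs ! j - 1)])
       (bernoulli_pmf (real (k - xs ! j) / real k)))"

fun iter_kernel :: "nat \<Rightarrow> ('a \<Rightarrow> 'a pmf) \<Rightarrow> 'a \<Rightarrow> 'a pmf" where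
  "iter_kernel 0 K x = return_pmf x"
| "iter_kernel (Suc n) K x = bind_pmf (K x) (iter_kernel n K)"

definition slot :: "nat \<Rightarrow> nat \<Rightarrow> nat \<Rightarrow> nat list \<Rightarrow> nat list pmf" where
  "slot lam N k = iter_kernel lam (request N k)"

fun path_pmf :: "('a \<Rightarrow> 'a pmf) \<Rightarrow> 'a pmf \<Rightarrow> nat \<Rightarrow> 'a list pmf" where
  "path_pmf K mu 0 = map_pmf (\<lambda>x. [x]) mu"
| "path_pmf K mu (Suc n) =
     bind_pmf (path_pmf K mu n) (\<lambda>xs. map_pmf (\<lambda>y. xs @ [y]) (K (last xs)))"

definition frac :: "nat \<Rightarrow> nat list \<Rightarrow> nat \<Rightarrow> real" where
  "frac N xs i = real (count_list xs i) / real N"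

definition vnorm :: "nat \<Rightarrow> (nat \<Rightarrow> real) \<Rightarrow> real" where
  "vnorm k v = Max ((\<lambda>i. \<bar>v i\<bar>) ` {..k})"

definition ode_rhs :: "nat \<Rightarrow> nat \<Rightarrow> (nat \<Rightarrow> real) \<Rightarrow> nat \<Rightarrow> real" where
  "ode_rhs lam k s i =
     (if i = 0 then - real lam * s 0 + real lam / real k * s 1
      else if i = k then - real lam * s k + real lam / real k * s (k - 1)
      else - real lam * s i + real lam * real (k - i + 1) / real k * s (i - 1)
           + real lam * real (i + 1) / real k * s (i + 1))"

definition rescaled :: "nat \<Rightarrow> nat list list \<Rightarrow> real \<Rightarrow> nat \<Rightarrow> real" where
  "rescaled N p t = frac N (p ! nat \<lfloor>real N * t\<rfloor>)"

end

theory Submission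
  imports Defs
begin


lemma integral_bind_pmf_fin:
  fixes g :: "'b \<Rightarrow> real"
  assumes S: "finite S" and sub: "\<And>x. x \<in> set_pmf M \<Longrightarrow> set_pmf (f x) \<subseteq> S"
  shows "measure_pmf.expectation (bind_pmf M f) g = measure_pmf.expectation M (\<lambda>x. measure_pmf.expectation (f x) g)"
proof -
  define g' where "g' y = (if y \<in> S then g y else 0)" for y
  have b: "\<bar>g' y\<bar> \<le> (\<Sum>z\<in>S. \<bar>g z\<bar>)" for y
    using S by (auto simp: g'_def intro: member_le_sum)
  have "measure_pmf.expectation (bind_pmf M f) g = measure_pmf.expectation (bind_pmf M f) g'"
    by (intro integral_cong_AE) (auto simp: AE_measure_pmf_iff g'_def dest: sub)
  also have "\<dots> = measure_pmf.expectation M (\<lambda>x. measure_pmf.expectation (f x) g')"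
    unfolding measure_pmf_bind
    by (rule integral_bind[where K="count_space UNIV" and B="\<Sum>z\<in>S. \<bar>g z\<bar>" and B'=1])
       (auto simp: b measure_pmf.finite_measure_axioms
             intro: measure_pmf_in_subprob_algebra)
  also have "\<dots> = measure_pmf.expectation M (\<lambda>x. measure_pmf.expectation (f x) g)"
    by (intro integral_cong_AE) (auto simp: AE_measure_pmf_iff g'_def dest!: sub intro!: integral_cong_AE)
  finally show ?thesis .
qed

lemma iter_add: "iter_kernel (a + b) K x = bind_pmf (iter_kernel a K x) (iter_kernel b K)"
proof (induction a arbitrary: x)
  case 0 then show ?case by (simp add: bind_return_pmf)
next
  case (Suc a)
  have "iter_kernel (a + b) K = (\<lambda>z. bind_pmf (iter_kernel a K z) (iter_kernel b K))"
    using Suc by (simp add: fun_eq_iff)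
  then show ?case by (simp add: bind_assoc_pmf)
qed

lemma iter_Suc_right: "iter_kernel (Suc n) K x = bind_pmf (iter_kernel n K x) K"
proof -
  have "iter_kernel (n + 1) K x = bind_pmf (iter_kernel n K x) (iter_kernel 1 K)"
    by (rule iter_add)
  moreover have "iter_kernel 1 K = K"
  proof
    fix z show "iter_kernel 1 K z = K z"
      using bind_return_pmf'[of "K z"] by (simp add: iter_kernel.simps(1)[abs_def])
  qed
  ultimately show ?thesis by simp
qed

lemma iter_mult: "iter_kernel n (iter_kernel l K) x = iter_kernel (n * l) K x"
proof (induction n arbitrary: x)
  case 0 then show ?case by simp
next
  case (Suc n)
  have "iter_kernel (Suc n) (iter_kernel l K) x = bind_pmf (iter_kernel l K x) (iter_kernel (n*l) K)"
  proof -
    have "iter_kernel n (iter_kernel l K) = iter_kernel (n*l) K" using Suc by (simp add: fun_eq_iff)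
    then show ?thesis by simp
  qed
  also have "\<dots> = iter_kernel (l + n*l) K x" by (simp add: iter_add)
  finally show ?case by simp
qed

lemma set_pmf_iter:
  assumes inv: "\<And>z. z \<in> S \<Longrightarrow> set_pmf (K z) \<subseteq> S" and x: "x \<in> S"
  shows "set_pmf (iter_kernel n K x) \<subseteq> S"
  using x by (induction n arbitrary: x) (auto dest!: inv)

lemma mart4:
  fixes f :: "nat \<Rightarrow> 'a \<Rightarrow> real"
  assumes fin: "finite S" and inv: "\<And>z. z \<in> S \<Longrightarrow> set_pmf (K z) \<subseteq> S"
    and cond: "\<And>j z. j < M \<Longrightarrow> z \<in> S \<Longrightarrow> measure_pmf.expectation (K z) (f (Suc j)) = f j z"
    and bd: "\<And>j z y. j < M \<Longrightarrow> z \<in> S \<Longrightarrow> y \<in> set_pmf (K z) \<Longrightarrow> \<bar>f (Suc j) y - f j z\<bar> \<le> b"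
    and x: "x \<in> S" and nM: "n \<le> M"
  shows "measure_pmf.expectation (iter_kernel n K x) (\<lambda>y. (f n y - f 0 x)^2) \<le> real n * b^2
       \<and> measure_pmf.expectation (iter_kernel n K x) (\<lambda>y. (f n y - f 0 x)^4) \<le> 4 * real n^2 * b^4"
  using nM
proof (induction n)
  case 0 then show ?case by simp
next
  case (Suc n)
  then have IH: "measure_pmf.expectation (iter_kernel n K x) (\<lambda>y. (f n y - f 0 x)^2) \<le> real n * b^2"
     "measure_pmf.expectation (iter_kernel n K x) (\<lambda>y. (f n y - f 0 x)^4) \<le> 4 * real n^2 * b^4"
    by auto
  have nM: "n < M" using Suc by auto
  have supp: "set_pmf (iter_kernel n K x) \<subseteq> S" by (rule set_pmf_iter[OF inv x])
  have finK: "finite (set_pmf (K z))" if "z \<in> S" for z using inv[OF that] fin finite_subset by blast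
  have finI: "finite (set_pmf (iter_kernel n K x))" using supp fin finite_subset by blast
  have b0: "0 \<le> b"
  proof -
    obtain y where "y \<in> set_pmf (K x)" by (meson ex_in_conv set_pmf_not_empty)
    from bd[OF nM x this] show ?thesis by simp
  qed
  have inner: "measure_pmf.expectation (K z) (\<lambda>y. (f (Suc n) y - f 0 x)^2) \<le> (f n z - f 0 x)^2 + b^2
     \<and> measure_pmf.expectation (K z) (\<lambda>y. (f (Suc n) y - f 0 x)^4) \<le> (f n z - f 0 x)^4 + 8*b^2*(f n z - f 0 x)^2 + 3*b^4"
    if z: "z \<in> S" for z
  proof -
    define w where "w = f n z - f 0 x"
    define e where "e y = f (Suc n) y - f n z" for y
    have int: "integrable (measure_pmf (K z)) h" for h :: "'a \<Rightarrow> real"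
      by (rule integrable_measure_pmf_finite[OF finK[OF z]])
    have e0: "measure_pmf.expectation (K z) e = 0"
      unfolding e_def using cond[OF nM z] by (simp add: int)
    have eb: "\<bar>e y\<bar> \<le> b" if "y \<in> set_pmf (K z)" for y
      using bd[OF nM z that] by (simp add: e_def)
    have eq2: "(f (Suc n) y - f 0 x)^2 = w^2 + 2*w*e y + (e y)^2" for y
      by (simp add: w_def e_def power2_eq_square algebra_simps)
    have eq4: "(f (Suc n) y - f 0 x)^4 = w^4 + 4*w^3*e y + (6*w^2*(e y)^2 + 4*w*(e y)^3 + (e y)^4)" for y
      by (simp add: w_def e_def power2_eq_square power3_eq_cube algebra_simps power4_eq_xxxx)
    have "measure_pmf.expectation (K z) (\<lambda>y. (f (Suc n) y - f 0 x)^2)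
        = w^2 + 2*w*measure_pmf.expectation (K z) e + measure_pmf.expectation (K z) (\<lambda>y. (e y)^2)"
      unfolding eq2 by (simp add: int)
    also have "\<dots> \<le> w^2 + b^2"
    proof -
      have "measure_pmf.expectation (K z) (\<lambda>y. (e y)^2) \<le> measure_pmf.expectation (K z) (\<lambda>y. b^2)"
      proof (intro integral_mono_AE)
        show "AE y in measure_pmf (K z). (e y)^2 \<le> b^2"
        proof (unfold AE_measure_pmf_iff, intro ballI)
          fix y assume "y \<in> set_pmf (K z)"
          then have "\<bar>e y\<bar> \<le> \<bar>b\<bar>" using eb b0 by auto
          then show "(e y)^2 \<le> b^2" by (simp add: abs_le_square_iff)
        qed
      qed (auto simp: int)
      then show ?thesis using e0 by simp
    qed
    finally have r2: "measure_pmf.expectation (K z) (\<lambda>y. (f (Suc n) y - f 0 x)^2) \<le> w^2 + b^2" .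
    have pt: "6*w^2*(e y)^2 + 4*w*(e y)^3 + (e y)^4 \<le> 8*b^2*w^2 + 3*b^4" if "y \<in> set_pmf (K z)" for y
    proof -
      have a: "\<bar>e y\<bar> \<le> b" by (rule eb[OF that])
      have s2: "(e y)^2 \<le> b^2" using a b0 abs_le_square_iff[of "e y" b] by simp
      have s4: "(e y)^4 \<le> b^4"
      proof -
        have "((e y)^2)^2 \<le> (b^2)^2" by (rule power_mono[OF s2]) simp
        then show ?thesis by (simp add: power_mult[symmetric])
      qed
      have "4*w*(e y)^3 \<le> 4*\<bar>w\<bar>*b^3"
      proof -
        have "w*(e y)^3 \<le> \<bar>w\<bar>*\<bar>e y\<bar>^3" by (metis abs_ge_self abs_mult power_abs)
        also have "\<dots> \<le> \<bar>w\<bar>*b^3" by (intro mult_left_mono power_mono a) auto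
        finally show ?thesis by simp
      qed
      also have "\<dots> \<le> 2*b^2*w^2 + 2*b^4"
      proof -
        have "0 \<le> b^2 * (\<bar>w\<bar> - b)^2" by simp
        then show ?thesis by (simp add: power2_eq_square power3_eq_cube power4_eq_xxxx algebra_simps)
      qed
      finally have "4*w*(e y)^3 \<le> 2*b^2*w^2 + 2*b^4" .
      moreover have "6*w^2*(e y)^2 \<le> 6*w^2*b^2" using s2 by (intro mult_left_mono) auto
      ultimately show ?thesis using s4 by (simp add: algebra_simps)
    qed
    have "measure_pmf.expectation (K z) (\<lambda>y. (f (Suc n) y - f 0 x)^4)
        = w^4 + 4*w^3*measure_pmf.expectation (K z) e + measure_pmf.expectation (K z) (\<lambda>y. 6*w^2*(e y)^2 + 4*w*(e y)^3 + (e y)^4)"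
      unfolding eq4 by (simp add: int)
    also have "\<dots> \<le> w^4 + 8*b^2*w^2 + 3*b^4"
    proof -
      have "measure_pmf.expectation (K z) (\<lambda>y. 6*w^2*(e y)^2 + 4*w*(e y)^3 + (e y)^4)
           \<le> measure_pmf.expectation (K z) (\<lambda>y. 8*b^2*w^2 + 3*b^4)"
        using pt by (intro integral_mono_AE) (auto simp: int AE_measure_pmf_iff)
      then show ?thesis using e0 by simp
    qed
    finally show ?thesis using r2 by (simp add: w_def)
  qed
  have intI: "integrable (measure_pmf (iter_kernel n K x)) h" for h :: "'a \<Rightarrow> real"
    by (rule integrable_measure_pmf_finite[OF finI])
  have bindsub: "\<And>z. z \<in> set_pmf (iter_kernel n K x) \<Longrightarrow> set_pmf (K z) \<subseteq> S"
    using supp inv by blast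
  have "measure_pmf.expectation (iter_kernel (Suc n) K x) (\<lambda>y. (f (Suc n) y - f 0 x)^2)
      = measure_pmf.expectation (iter_kernel n K x) (\<lambda>z. measure_pmf.expectation (K z) (\<lambda>y. (f (Suc n) y - f 0 x)^2))"
    unfolding iter_Suc_right by (rule integral_bind_pmf_fin[OF fin bindsub])
  also have "\<dots> \<le> measure_pmf.expectation (iter_kernel n K x) (\<lambda>z. (f n z - f 0 x)^2 + b^2)"
    using inner supp by (intro integral_mono_AE) (auto simp: intI AE_measure_pmf_iff)
  also have "\<dots> = measure_pmf.expectation (iter_kernel n K x) (\<lambda>z. (f n z - f 0 x)^2) + b^2"
    by (simp add: intI)
  also have "\<dots> \<le> real (Suc n) * b^2" using IH(1) by (simp add: algebra_simps)
  finally have A2: "measure_pmf.expectation (iter_kernel (Suc n) K x) (\<lambda>y. (f (Suc n) y - f 0 x)^2) \<le> real (Suc n) * b^2" .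
  have "measure_pmf.expectation (iter_kernel (Suc n) K x) (\<lambda>y. (f (Suc n) y - f 0 x)^4)
      = measure_pmf.expectation (iter_kernel n K x) (\<lambda>z. measure_pmf.expectation (K z) (\<lambda>y. (f (Suc n) y - f 0 x)^4))"
    unfolding iter_Suc_right by (rule integral_bind_pmf_fin[OF fin bindsub])
  also have "\<dots> \<le> measure_pmf.expectation (iter_kernel n K x) (\<lambda>z. (f n z - f 0 x)^4 + 8*b^2*(f n z - f 0 x)^2 + 3*b^4)"
    using inner supp by (intro integral_mono_AE) (auto simp: intI AE_measure_pmf_iff)
  also have "\<dots> = measure_pmf.expectation (iter_kernel n K x) (\<lambda>z. (f n z - f 0 x)^4)
        + 8*b^2*measure_pmf.expectation (iter_kernel n K x) (\<lambda>z. (f n z - f 0 x)^2) + 3*b^4"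
    by (simp add: intI)
  also have "\<dots> \<le> 4 * real n^2 * b^4 + 8*b^2*(real n * b^2) + 3*b^4"
    using IH b0 by (intro add_mono mult_left_mono) auto
  also have "\<dots> \<le> 4 * real (Suc n)^2 * b^4"
    using b0 by (simp add: power2_eq_square power4_eq_xxxx algebra_simps)
  finally show ?case using A2 by simp
qed



lemma path_len: "xs \<in> set_pmf (path_pmf K mu L) \<Longrightarrow> length xs = Suc L"
  by (induction L arbitrary: xs) auto

lemma path_pair:
  assumes "n \<le> L"
  shows "map_pmf (\<lambda>p. (p!0, p!n)) (path_pmf K mu L) = bind_pmf mu (\<lambda>x. map_pmf (Pair x) (iter_kernel n K x))"
  using assms
proof (induction L arbitrary: n)
  case 0
  then have n: "n = 0" by simp
  have "map_pmf (\<lambda>p. (p!0, p!n)) (path_pmf K mu 0) = map_pmf (\<lambda>x. (x,x)) mu"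
    by (simp add: n map_pmf_comp)
  also have "\<dots> = bind_pmf mu (\<lambda>x. return_pmf (x,x))" by (simp add: map_pmf_def)
  finally show ?case by (simp add: n)
next
  case (Suc L)
  let ?P = "path_pmf K mu L"
  show ?case
  proof (cases "n \<le> L")
    case True
    have "map_pmf (\<lambda>p. (p!0, p!n)) (path_pmf K mu (Suc L))
        = bind_pmf ?P (\<lambda>xs. map_pmf (\<lambda>y. ((xs@[y])!0, (xs@[y])!n)) (K (last xs)))"
      by (simp add: map_bind_pmf map_pmf_comp)
    also have "\<dots> = bind_pmf ?P (\<lambda>xs. return_pmf (xs!0, xs!n))"
    proof (rule bind_pmf_cong[OF refl])
      fix xs assume "xs \<in> set_pmf ?P"
      then have "length xs = Suc L" by (rule path_len)
      then have "(\<lambda>y. ((xs@[y])!0, (xs@[y])!n)) = (\<lambda>y. (xs!0, xs!n))"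
        using True by (auto simp: nth_append)
      then show "map_pmf (\<lambda>y. ((xs@[y])!0, (xs@[y])!n)) (K (last xs)) = return_pmf (xs!0, xs!n)"
        by (simp add: map_pmf_const)
    qed
    also have "\<dots> = map_pmf (\<lambda>p. (p!0, p!n)) ?P" by (simp add: map_pmf_def)
    finally show ?thesis using Suc.IH[OF True] by simp
  next
    case False
    then have n: "n = Suc L" using Suc by simp
    have "map_pmf (\<lambda>p. (p!0, p!n)) (path_pmf K mu (Suc L))
        = bind_pmf ?P (\<lambda>xs. map_pmf (\<lambda>y. ((xs@[y])!0, (xs@[y])!n)) (K (last xs)))"
      by (simp add: map_bind_pmf map_pmf_comp)
    also have "\<dots> = bind_pmf ?P (\<lambda>xs. map_pmf (Pair (xs!0)) (K (xs!L)))"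
    proof (rule bind_pmf_cong[OF refl])
      fix xs assume "xs \<in> set_pmf ?P"
      then have l: "length xs = Suc L" by (rule path_len)
      then have "(\<lambda>y. ((xs@[y])!0, (xs@[y])!n)) = Pair (xs!0)"
        using n by (auto simp: nth_append)
      moreover have "last xs = xs!L" using l by (metis diff_Suc_1 last_conv_nth list.size(3) nat.distinct(1))
      ultimately show "map_pmf (\<lambda>y. ((xs@[y])!0, (xs@[y])!n)) (K (last xs)) = map_pmf (Pair (xs!0)) (K (xs!L))"
        by simp
    qed
    also have "\<dots> = bind_pmf (map_pmf (\<lambda>p. (p!0, p!L)) ?P) (\<lambda>(a,b). map_pmf (Pair a) (K b))"
      by (simp add: bind_map_pmf)
    also have "\<dots> = bind_pmf mu (\<lambda>x. bind_pmf (iter_kernel L K x) (\<lambda>b. map_pmf (Pair x) (K b)))"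
      by (simp add: Suc.IH bind_assoc_pmf bind_map_pmf)
    also have "\<dots> = bind_pmf mu (\<lambda>x. map_pmf (Pair x) (iter_kernel (Suc L) K x))"
      by (simp only: iter_Suc_right map_bind_pmf)
    finally show ?thesis using n by simp
  qed
qed

lemma path_0: "map_pmf (\<lambda>p. p!0) (path_pmf K mu L) = mu"
proof -
  have "map_pmf (\<lambda>p. p!0) (path_pmf K mu L) = map_pmf fst (map_pmf (\<lambda>p. (p!0, p!0)) (path_pmf K mu L))"
    by (simp add: map_pmf_comp)
  also have "\<dots> = map_pmf fst (bind_pmf mu (\<lambda>x. map_pmf (Pair x) (iter_kernel 0 K x)))"
    by (simp only: path_pair[of 0 L])
  also have "\<dots> = bind_pmf mu return_pmf" by (simp add: map_bind_pmf)
  also have "\<dots> = mu" by (rule bind_return_pmf')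
  finally show ?thesis .
qed

lemma prob_path_0: "measure_pmf.prob (path_pmf K mu L) {p. P (p!0)} = measure_pmf.prob mu {x. P x}"
proof -
  have "measure_pmf.prob (path_pmf K mu L) {p. P (p!0)} = measure_pmf.prob (map_pmf (\<lambda>p. p!0) (path_pmf K mu L)) {x. P x}"
    by (simp add: vimage_def)
  then show ?thesis by (simp only: path_0)
qed

lemma prob_path_pair_le:
  assumes n: "n \<le> L" and c: "0 \<le> c"
    and b: "\<And>x. x \<in> set_pmf mu \<Longrightarrow> measure_pmf.prob (iter_kernel n K x) {y. Q x y} \<le> c"
  shows "measure_pmf.prob (path_pmf K mu L) {p. Q (p!0) (p!n)} \<le> c"
proof -
  let ?Z = "{z. Q (fst z) (snd z)}"
  have "measure_pmf.prob (path_pmf K mu L) {p. Q (p!0) (p!n)}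
      = measure_pmf.prob (map_pmf (\<lambda>p. (p!0, p!n)) (path_pmf K mu L)) ?Z"
    by (simp add: vimage_def)
  also have "\<dots> = measure_pmf.prob (bind_pmf mu (\<lambda>x. map_pmf (Pair x) (iter_kernel n K x))) ?Z"
    by (simp only: path_pair[OF n])
  finally have eq: "measure_pmf.prob (path_pmf K mu L) {p. Q (p!0) (p!n)} = measure_pmf.prob (bind_pmf mu (\<lambda>x. map_pmf (Pair x) (iter_kernel n K x))) ?Z" .
  have "emeasure (measure_pmf (bind_pmf mu (\<lambda>x. map_pmf (Pair x) (iter_kernel n K x)))) ?Z
      = (\<integral>\<^sup>+x. emeasure (measure_pmf (map_pmf (Pair x) (iter_kernel n K x))) ?Z \<partial>mu)"
    by simp
  also have "\<dots> \<le> (\<integral>\<^sup>+x. ennreal c \<partial>mu)"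
  proof (rule nn_integral_mono_AE)
    show "AE x in measure_pmf mu. emeasure (measure_pmf (map_pmf (Pair x) (iter_kernel n K x))) ?Z \<le> ennreal c"
    proof (unfold AE_measure_pmf_iff, intro ballI)
      fix x assume x: "x \<in> set_pmf mu"
      have "emeasure (measure_pmf (map_pmf (Pair x) (iter_kernel n K x))) ?Z
          = ennreal (measure_pmf.prob (iter_kernel n K x) {y. Q x y})"
        by (simp add: measure_pmf.emeasure_eq_measure vimage_def)
      then show "emeasure (measure_pmf (map_pmf (Pair x) (iter_kernel n K x))) ?Z \<le> ennreal c"
        using b[OF x] by (simp add: ennreal_leI)
    qed
  qed
  also have "\<dots> = ennreal c" by (simp add: measure_pmf.emeasure_space_1)
  finally show ?thesis using eq c by (simp add: measure_pmf.emeasure_eq_measure)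
qed



definition Aop :: "nat \<Rightarrow> nat \<Rightarrow> nat \<Rightarrow> (nat \<Rightarrow> real) \<Rightarrow> nat \<Rightarrow> real" where
  "Aop lam N k v = (\<lambda>i. v i + ode_rhs lam k v i / (real lam * real N))"

fun Apow :: "nat \<Rightarrow> nat \<Rightarrow> nat \<Rightarrow> nat \<Rightarrow> (nat \<Rightarrow> real) \<Rightarrow> nat \<Rightarrow> real" where
  "Apow lam N k 0 v = v"
| "Apow lam N k (Suc m) v = Aop lam N k (Apow lam N k m v)"

lemma Apow_Suc_right: "Apow lam N k (Suc m) v = Apow lam N k m (Aop lam N k v)"
  by (induction m) auto

lemma Aop_apply: "Aop lam N k v i = v i + ode_rhs lam k v i / (real lam * real N)"
  by (simp add: Aop_def)

lemma vnorm_ge: "i \<le> k \<Longrightarrow> \<bar>v i\<bar> \<le> vnorm k v"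
  unfolding vnorm_def by (rule Max_ge) auto

lemma vnorm_le: "(\<And>i. i \<le> k \<Longrightarrow> \<bar>v i\<bar> \<le> c) \<Longrightarrow> vnorm k v \<le> c"
  unfolding vnorm_def by (subst Max_le_iff) auto

lemma vnorm_nonneg: "0 \<le> vnorm k v"
  using vnorm_ge[of 0 k v] by simp

lemma vnorm_gt: "c < vnorm k v \<Longrightarrow> \<exists>i\<le>k. c < \<bar>v i\<bar>"
  using vnorm_le[of k v c] by force

lemma ode_rhs_bound:
  assumes k: "k \<ge> 1" and i: "i \<le> k"
  shows "\<bar>ode_rhs lam k v i\<bar> \<le> 3 * real lam * vnorm k v"
proof -
  let ?V = "vnorm k v"
  have V: "\<And>j. j \<le> k \<Longrightarrow> \<bar>v j\<bar> \<le> ?V" by (rule vnorm_ge)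
  have V0: "0 \<le> ?V" by (rule vnorm_nonneg)
  have kp: "real k \<ge> 1" using k by simp
  have t: "\<bar>a * b\<bar> \<le> ?V" if "\<bar>a\<bar> \<le> 1" "\<bar>b\<bar> \<le> ?V" for a b :: real
  proof -
    have "\<bar>a * b\<bar> = \<bar>a\<bar> * \<bar>b\<bar>" by (simp add: abs_mult)
    also have "\<dots> \<le> 1 * ?V" by (intro mult_mono that) auto
    finally show ?thesis by simp
  qed
  have h3: "\<bar>real lam * (x + y + z)\<bar> \<le> 3 * real lam * ?V" if "\<bar>x\<bar> \<le> ?V" "\<bar>y\<bar> \<le> ?V" "\<bar>z\<bar> \<le> ?V" for x y z
  proof -
    have "\<bar>x + y + z\<bar> \<le> 3 * ?V" using that by arith
    then have "real lam * \<bar>x + y + z\<bar> \<le> real lam * (3 * ?V)" by (rule mult_left_mono) simp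
    then show ?thesis by (simp add: abs_mult)
  qed
  have k1: "\<bar>1 / real k\<bar> \<le> 1" using kp by simp
  show ?thesis
  proof (cases "i = 0")
    case True
    have e: "ode_rhs lam k v i = real lam * (- v 0 + 1 / real k * v 1 + 0)"
      using True by (simp add: ode_rhs_def algebra_simps)
    show ?thesis unfolding e by (rule h3) (use V[of 0] t[OF k1 V[of 1]] k V0 in auto)
  next
    case False
    show ?thesis
    proof (cases "i = k")
      case True
      have e: "ode_rhs lam k v i = real lam * (- v k + 1 / real k * v (k - 1) + 0)"
        using True \<open>i \<noteq> 0\<close> by (simp add: ode_rhs_def algebra_simps)
      show ?thesis unfolding e by (rule h3) (use V[of k] t[OF k1 V[of "k-1"]] V0 in auto)
    next
      case False2: False
      have a1: "\<bar>real (k - i + 1) / real k\<bar> \<le> 1" using \<open>i \<noteq> 0\<close> i kp by (simp add: of_nat_diff)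
      have a2: "\<bar>real (i + 1) / real k\<bar> \<le> 1" using False2 i kp by simp
      have e: "ode_rhs lam k v i = real lam * (- v i + real (k - i + 1) / real k * v (i - 1) + real (i + 1) / real k * v (i + 1))"
        using False2 \<open>i \<noteq> 0\<close> by (simp add: ode_rhs_def algebra_simps)
      show ?thesis unfolding e by (rule h3) (use V[of i] t[OF a1 V[of "i-1"]] t[OF a2 V[of "i+1"]] i False2 in auto)
    qed
  qed
qed

lemma ode_rhs_diff: "ode_rhs lam k (\<lambda>j. u j - w j) i = ode_rhs lam k u i - ode_rhs lam k w i"
  by (simp add: ode_rhs_def right_diff_distrib)

lemma ode_rhs_local: "(\<And>l. l \<le> k \<Longrightarrow> u l = w l) \<Longrightarrow> i \<le> k \<Longrightarrow> ode_rhs lam k u i = ode_rhs lam k w i"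
  by (simp add: ode_rhs_def)

lemma Apow_diff: "Apow lam N k m (\<lambda>j. u j - w j) = (\<lambda>j. Apow lam N k m u j - Apow lam N k m w j)"
proof (induction m)
  case 0 then show ?case by simp
next
  case (Suc m)
  show ?case by (simp only: Apow.simps Suc) (simp add: Aop_apply ode_rhs_diff diff_divide_distrib fun_eq_iff)
qed

lemma Apow_local: "(\<And>l. l \<le> k \<Longrightarrow> u l = w l) \<Longrightarrow> i \<le> k \<Longrightarrow> Apow lam N k m u i = Apow lam N k m w i"
proof (induction m arbitrary: i)
  case 0 then show ?case by simp
next
  case (Suc m)
  have "ode_rhs lam k (Apow lam N k m u) i = ode_rhs lam k (Apow lam N k m w) i"
    by (rule ode_rhs_local) (use Suc in auto)
  then show ?case using Suc by (simp add: Aop_apply)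
qed

lemma Aop_bound:
  assumes k: "k \<ge> 1" and N: "N > 0" and lam: "lam \<ge> 1"
  shows "vnorm k (Aop lam N k v) \<le> (1 + 3 / real N) * vnorm k v"
proof (rule vnorm_le)
  fix i assume i: "i \<le> k"
  have "\<bar>Aop lam N k v i\<bar> \<le> \<bar>v i\<bar> + \<bar>ode_rhs lam k v i\<bar> / (real lam * real N)"
    unfolding Aop_apply using abs_triangle_ineq[of "v i" "ode_rhs lam k v i / (real lam * real N)"]
    by (simp add: abs_divide)
  also have "\<dots> \<le> vnorm k v + (3 * real lam * vnorm k v) / (real lam * real N)"
    using N lam by (intro add_mono vnorm_ge i divide_right_mono ode_rhs_bound k) auto
  also have "\<dots> = (1 + 3 / real N) * vnorm k v" using lam N by (simp add: field_simps)
  finally show "\<bar>Aop lam N k v i\<bar> \<le> (1 + 3 / real N) * vnorm k v" .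
qed

lemma Apow_bound:
  assumes k: "k \<ge> 1" and N: "N > 0" and lam: "lam \<ge> 1"
  shows "vnorm k (Apow lam N k m v) \<le> (1 + 3 / real N)^m * vnorm k v"
proof (induction m)
  case 0 then show ?case by simp
next
  case (Suc m)
  have "vnorm k (Apow lam N k (Suc m) v) \<le> (1 + 3 / real N) * vnorm k (Apow lam N k m v)"
    using Aop_bound[OF k N lam] by simp
  also have "\<dots> \<le> (1 + 3 / real N) * ((1 + 3 / real N)^m * vnorm k v)"
    by (rule mult_left_mono[OF Suc]) simp
  finally show ?case by simp
qed

lemma pow_exp_bound:
  assumes "N > 0" "real m \<le> real N * c"
  shows "(1 + 3 / real N)^m \<le> exp (3 * c)"
proof -
  have "(1 + 3 / real N)^m \<le> exp (3 / real N)^m"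
    by (intro power_mono) (auto simp: exp_ge_add_one_self add.commute)
  also have "\<dots> = exp (real m * (3 / real N))" by (rule exp_of_nat_mult[symmetric])
  also have "\<dots> \<le> exp (3 * c)"
    using assms by (simp add: field_simps)
  finally show ?thesis .
qed

lemma ode_rhs_integral:
  assumes fin: "finite (set_pmf M)"
  shows "measure_pmf.expectation M (\<lambda>y. ode_rhs lam k (g y) i) = ode_rhs lam k (\<lambda>l. measure_pmf.expectation M (\<lambda>y. g y l)) i"
proof -
  have int: "integrable (measure_pmf M) h" for h :: "'a \<Rightarrow> real" by (rule integrable_measure_pmf_finite[OF fin])
  show ?thesis unfolding ode_rhs_def by (simp add: int)
qed

lemma Apow_integral:
  assumes fin: "finite (set_pmf M)"
  shows "measure_pmf.expectation M (\<lambda>y. Apow lam N k m (g y) i) = Apow lam N k m (\<lambda>l. measure_pmf.expectation M (\<lambda>y. g y l)) i"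
proof (induction m arbitrary: i)
  case 0 then show ?case by simp
next
  case (Suc m)
  have int: "integrable (measure_pmf M) h" for h :: "'a \<Rightarrow> real" by (rule integrable_measure_pmf_finite[OF fin])
  have "measure_pmf.expectation M (\<lambda>y. Apow lam N k (Suc m) (g y) i)
     = measure_pmf.expectation M (\<lambda>y. Apow lam N k m (g y) i)
       + measure_pmf.expectation M (\<lambda>y. ode_rhs lam k (Apow lam N k m (g y)) i) / (real lam * real N)"
    by (simp add: Aop_apply int)
  also have "\<dots> = Apow lam N k (Suc m) (\<lambda>l. measure_pmf.expectation M (\<lambda>y. g y l)) i"
    by (simp add: ode_rhs_integral[OF fin] Suc Aop_apply)
  finally show ?case .
qed



definition SS :: "nat \<Rightarrow> nat \<Rightarrow> nat list set" where
  "SS N k = {xs. set xs \<subseteq> {..k} \<and> length xs = N}"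

lemma finite_SS: "finite (SS N k)"
  unfolding SS_def by (rule finite_lists_length_eq) simp

lemma count_update:
  assumes "j < length xs"
  shows "real (count_list (xs[j := v]) i) = real (count_list xs i) - (if xs!j = i then 1 else 0) + (if v = i then 1 else 0)"
proof -
  have m: "xs!j \<in># mset xs" using assms by simp
  have "count_list (xs[j := v]) i = count (add_mset v (mset xs - {#xs!j#})) i"
    using assms by (simp add: mset_update count_mset[symmetric])
  moreover have "count (mset xs) (xs!j) \<ge> 1" using m by (simp add: Suc_le_eq)
  ultimately show ?thesis by (auto simp: count_mset of_nat_diff)
qed

lemma frac_bounds:
  assumes "length xs = N" "N > 0"
  shows "0 \<le> frac N xs i" "frac N xs i \<le> 1"
proof -
  show "0 \<le> frac N xs i" by (simp add: frac_def)
  have "count_list xs i \<le> length xs"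
    by (induction xs) auto
  then show "frac N xs i \<le> 1" using assms by (simp add: frac_def)
qed

lemma vnorm_frac: "length xs = N \<Longrightarrow> N > 0 \<Longrightarrow> vnorm k (frac N xs) \<le> 1"
  by (rule vnorm_le) (use frac_bounds in auto)

lemma frac_update:
  assumes "j < length xs" "length xs = N" "N > 0"
  shows "\<bar>frac N (xs[j := v]) i - frac N xs i\<bar> \<le> 1 / real N"
proof -
  have "frac N (xs[j := v]) i - frac N xs i = ((if v = i then 1 else 0) - (if xs!j = i then 1 else 0)) / real N"
    unfolding frac_def count_update[OF assms(1)] using assms(3) by (simp add: field_simps)
  then show ?thesis using assms by (auto simp: abs_divide)
qed

lemma p_range: "k \<ge> 1 \<Longrightarrow> 0 \<le> real (k - v) / real k \<and> real (k - v) / real k \<le> 1"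
  by auto

lemma request_supp:
  assumes xs: "xs \<in> SS N k" and N: "N > 0" and k: "k \<ge> 1" and y: "y \<in> set_pmf (request N k xs)"
  shows "y \<in> SS N k \<and> (\<exists>j<N. \<exists>v. y = xs[j := v])"
proof -
  from y obtain j up where j: "j < N" and up: "up \<in> set_pmf (bernoulli_pmf (real (k - xs ! j) / real k))"
    and yeq: "y = xs[j := (if up then xs ! j + 1 else xs ! j - 1)]"
  proof -
    have sp: "set_pmf (pmf_of_set {..<N}) = {..<N}" by (rule set_pmf_of_set) (use N in auto)
    show ?thesis using y that by (auto simp: request_def sp)
  qed
  have len: "length xs = N" and sub: "set xs \<subseteq> {..k}" using xs by (auto simp: SS_def)
  have xj: "xs!j \<le> k" using sub j len nth_mem by fastforce
  have "(if up then xs ! j + 1 else xs ! j - 1) \<le> k"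
  proof (cases up)
    case True
    then have "pmf (bernoulli_pmf (real (k - xs ! j) / real k)) True \<noteq> 0" using up by (simp add: set_pmf_iff)
    then have "real (k - xs ! j) / real k \<noteq> 0" using p_range[OF k] by simp
    then have "xs!j < k" by auto
    then show ?thesis using True by simp
  next
    case False then show ?thesis using xj by simp
  qed
  then have "y \<in> SS N k" using yeq sub len j by (auto simp: SS_def set_update_subset_insert dest!: set_update_subset_insert[THEN subsetD])
  then show ?thesis using yeq j by blast
qed

lemma sum_nth_count:
  fixes xs :: "nat list" and g :: "nat \<Rightarrow> real"
  assumes "set xs \<subseteq> {..k}"
  shows "(\<Sum>j<length xs. g (xs!j)) = (\<Sum>v\<le>k. real (count_list xs v) * g v)"
  using assms
proof (induction xs)
  case Nil then show ?case by simp
next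
  case (Cons a xs)
  have a: "a \<le> k" using Cons by auto
  have "(\<Sum>j<length (a#xs). g ((a#xs)!j)) = g a + (\<Sum>j<length xs. g (xs!j))"
    by (simp only: length_Cons sum.lessThan_Suc_shift nth_Cons_0 nth_Cons_Suc)
  also have "\<dots> = g a + (\<Sum>v\<le>k. real (count_list xs v) * g v)" using Cons by simp
  also have "\<dots> = (\<Sum>v\<le>k. real (count_list (a#xs) v) * g v)"
  proof -
    have "(\<Sum>v\<le>k. real (count_list (a#xs) v) * g v) = (\<Sum>v\<le>k. real (count_list xs v) * g v + (if a = v then g v else 0))"
      by (intro sum.cong) (auto simp: algebra_simps)
    also have "\<dots> = (\<Sum>v\<le>k. real (count_list xs v) * g v) + g a"
      using a by (simp add: sum.distrib sum.delta eq_commute[of a])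
    finally show ?thesis by simp
  qed
  finally show ?case .
qed



lemma request_expect:
  assumes xs: "xs \<in> SS N k" and N: "N > 0" and k: "k \<ge> 1" and lam: "lam \<ge> 1" and i: "i \<le> k"
  shows "measure_pmf.expectation (request N k xs) (\<lambda>y. frac N y i) = Aop lam N k (frac N xs) i"
proof -
  define p where "p v = real (k - v) / real k" for v
  define c where "c v = real (count_list xs v)" for v
  have len: "length xs = N" and sub: "set xs \<subseteq> {..k}" using xs by (auto simp: SS_def)
  have p01: "0 \<le> p v" "p v \<le> 1" for v using p_range[OF k] by (auto simp: p_def)
  let ?U = "pmf_of_set {..<N}"
  have sp: "set_pmf ?U = {..<N}" by (rule set_pmf_of_set) (use N in auto)
  have req: "request N k xs = bind_pmf ?U (\<lambda>j. map_pmf (\<lambda>up. xs[j := (if up then xs ! j + 1 else xs ! j - 1)]) (bernoulli_pmf (p (xs!j))))"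
    by (simp add: request_def p_def)
  have subF: "set_pmf (map_pmf (\<lambda>up. xs[j := (if up then xs ! j + 1 else xs ! j - 1)]) (bernoulli_pmf (p (xs!j)))) \<subseteq> SS N k"
    if "j \<in> set_pmf ?U" for j
  proof
    fix y assume "y \<in> set_pmf (map_pmf (\<lambda>up. xs[j := (if up then xs ! j + 1 else xs ! j - 1)]) (bernoulli_pmf (p (xs!j))))"
    then have "y \<in> set_pmf (request N k xs)" unfolding req using that by auto
    then show "y \<in> SS N k" using request_supp[OF xs N k] by blast
  qed
  define G where "G v = - (if v = i then 1 else 0) + p v * (if v + 1 = i then 1 else 0) + (1 - p v) * (if v - 1 = i then 1 else 0)" for v
  have termj: "frac N (xs[j := Suc (xs!j)]) i * p (xs!j) + frac N (xs[j := xs!j - Suc 0]) i * (1 - p (xs!j))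
        = frac N xs i + G (xs!j) / real N" if j: "j < N" for j
  proof -
    have jl: "j < length xs" using j len by simp
    show ?thesis unfolding frac_def count_update[OF jl] G_def using N
      by (simp add: field_simps)
  qed
  have "measure_pmf.expectation (request N k xs) (\<lambda>y. frac N y i)
      = measure_pmf.expectation ?U (\<lambda>j. measure_pmf.expectation (map_pmf (\<lambda>up. xs[j := (if up then xs ! j + 1 else xs ! j - 1)]) (bernoulli_pmf (p (xs!j)))) (\<lambda>y. frac N y i))"
    unfolding req by (rule integral_bind_pmf_fin[OF finite_SS subF])
  also have "\<dots> = measure_pmf.expectation ?U (\<lambda>j. frac N xs i + G (xs!j) / real N)"
    by (intro integral_cong_AE) (auto simp: AE_measure_pmf_iff sp p01 termj)
  also have "\<dots> = (\<Sum>j<N. frac N xs i + G (xs!j) / real N) / real N"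
    by (subst integral_pmf_of_set) (use N in auto)
  also have "\<dots> = frac N xs i + (\<Sum>j<N. G (xs!j)) / real N ^ 2"
    using N by (simp add: sum.distrib sum_divide_distrib[symmetric] field_simps power2_eq_square)
  also have "(\<Sum>j<N. G (xs!j)) = (\<Sum>v\<le>k. c v * G v)"
    using sum_nth_count[OF sub, of G] len by (simp add: c_def)
  also have "\<dots> = (\<Sum>v\<le>k. - (if v = i then c v else 0) + (if 0 < i \<and> v = i - 1 then c v * p v else 0)
                         + (if v = i + 1 then c v * (1 - p v) else 0))"
  proof (rule sum.cong[OF refl])
    fix v assume v: "v \<in> {..k}"
    have p0: "p 0 = 1" using k by (simp add: p_def)
    show "c v * G v = - (if v = i then c v else 0) + (if 0 < i \<and> v = i - 1 then c v * p v else 0)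
                         + (if v = i + 1 then c v * (1 - p v) else 0)"
    proof -
      have A: "(if v + 1 = i then 1 else 0) = (if 0 < i \<and> v = i - 1 then 1 else (0::real))" by auto
      have B: "(1 - p v) * (if v - 1 = i then 1 else 0) = (if v = i + 1 then 1 - p v else 0)"
        using p0 by (cases "v = 0") auto
      have Gv: "G v = - (if v = i then 1 else 0) + p v * (if 0 < i \<and> v = i - 1 then 1 else 0) + (if v = i + 1 then 1 - p v else 0)"
        unfolding G_def A B by simp
      show ?thesis unfolding Gv by (auto simp: algebra_simps)
    qed
  qed
  also have "\<dots> = - c i + (if 0 < i then c (i - 1) * p (i - 1) else 0) + (if i + 1 \<le> k then c (i+1) * (1 - p (i+1)) else 0)"
    using i by (simp add: sum.distrib sum.delta if_distrib[of "\<lambda>x. - x"] cong: if_cong)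
  finally have E: "measure_pmf.expectation (request N k xs) (\<lambda>y. frac N y i) =
      frac N xs i + (- c i + (if 0 < i then c (i - 1) * p (i - 1) else 0) + (if i + 1 \<le> k then c (i+1) * (1 - p (i+1)) else 0)) / real N ^ 2" .
  have fr: "frac N xs v = c v / real N" for v by (simp add: frac_def c_def)
  have kp: "real k > 0" using k by simp
  have O: "ode_rhs lam k (frac N xs) i = real lam * (- c i + (if 0 < i then c (i - 1) * p (i - 1) else 0) + (if i + 1 \<le> k then c (i+1) * (1 - p (i+1)) else 0)) / real N"
  proof (cases "i = 0")
    case True
    have "1 - p 1 = 1 / real k" using k kp by (simp add: p_def of_nat_diff field_simps)
    then have R: "(- c i + (if 0 < i then c (i - 1) * p (i - 1) else 0) + (if i + 1 \<le> k then c (i+1) * (1 - p (i+1)) else 0))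
       = - c 0 + c 1 / real k" using True k by simp
    show ?thesis unfolding R using True k N kp by (simp add: ode_rhs_def fr field_simps)
  next
    case False
    show ?thesis
    proof (cases "i = k")
      case True
      have "p (k - 1) = 1 / real k" using k by (simp add: p_def)
      then have R: "(- c i + (if 0 < i then c (i - 1) * p (i - 1) else 0) + (if i + 1 \<le> k then c (i+1) * (1 - p (i+1)) else 0))
       = - c k + c (k - 1) / real k" using True False by simp
      show ?thesis unfolding R using True False k N kp by (simp add: ode_rhs_def fr field_simps)
    next
      case F2: False
      have a: "p (i - 1) = real (k - i + 1) / real k" using False i by (simp add: p_def Suc_diff_le)
      have b: "1 - p (i + 1) = real (i + 1) / real k" using F2 i kp by (simp add: p_def of_nat_diff field_simps)
      have R: "(- c i + (if 0 < i then c (i - 1) * p (i - 1) else 0) + (if i + 1 \<le> k then c (i+1) * (1 - p (i+1)) else 0))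
       = - c i + c (i - 1) * (real (k - i + 1) / real k) + c (i + 1) * (real (i + 1) / real k)"
        using False F2 i a b by simp
      show ?thesis unfolding R using False F2 i N kp by (simp add: ode_rhs_def fr field_simps)
    qed
  qed
  show ?thesis unfolding E Aop_apply O using N lam by (simp add: field_simps power2_eq_square)
qed



lemma request_fin: "xs \<in> SS N k \<Longrightarrow> N > 0 \<Longrightarrow> k \<ge> 1 \<Longrightarrow> finite (set_pmf (request N k xs))"
proof -
  assume a: "xs \<in> SS N k" "N > 0" "k \<ge> 1"
  have "set_pmf (request N k xs) \<subseteq> SS N k" using request_supp[OF a] by blast
  then show ?thesis using finite_SS finite_subset by blast
qed

lemma request_step_bound:
  assumes z: "z \<in> SS N k" and N: "N > 0" and k: "k \<ge> 1" and lam: "lam \<ge> 1"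
    and y: "y \<in> set_pmf (request N k z)"
  shows "vnorm k (\<lambda>l. frac N y l - Aop lam N k (frac N z) l) \<le> 4 / real N"
proof (rule vnorm_le)
  fix l assume l: "l \<le> k"
  obtain j v where j: "j < N" and yeq: "y = z[j := v]" using request_supp[OF z N k y] by blast
  have len: "length z = N" using z by (simp add: SS_def)
  have a: "\<bar>frac N y l - frac N z l\<bar> \<le> 1 / real N"
    unfolding yeq by (rule frac_update) (use j len N in auto)
  have "\<bar>ode_rhs lam k (frac N z) l\<bar> \<le> 3 * real lam * vnorm k (frac N z)" by (rule ode_rhs_bound[OF k l])
  also have "\<dots> \<le> 3 * real lam * 1" using vnorm_frac[OF len N] by (intro mult_left_mono) auto
  finally have b0: "\<bar>ode_rhs lam k (frac N z) l\<bar> \<le> 3 * real lam" by simp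
  have b: "\<bar>ode_rhs lam k (frac N z) l / (real lam * real N)\<bar> \<le> 3 / real N"
  proof -
    have "\<bar>ode_rhs lam k (frac N z) l / (real lam * real N)\<bar> = \<bar>ode_rhs lam k (frac N z) l\<bar> / (real lam * real N)"
      by (simp add: abs_divide)
    also have "\<dots> \<le> (3 * real lam) / (real lam * real N)" using N lam b0 by (intro divide_right_mono) auto
    also have "\<dots> = 3 / real N" using lam by simp
    finally show ?thesis .
  qed
  have "\<bar>frac N y l - Aop lam N k (frac N z) l\<bar> \<le> \<bar>frac N y l - frac N z l\<bar> + \<bar>ode_rhs lam k (frac N z) l / (real lam * real N)\<bar>"
    unfolding Aop_apply
    using abs_triangle_ineq[of "frac N y l - frac N z l" "- (ode_rhs lam k (frac N z) l / (real lam * real N))"]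
    by (simp add: algebra_simps)
  also have "\<dots> \<le> 4 / real N" using a b by simp
  finally show "\<bar>frac N y l - Aop lam N k (frac N z) l\<bar> \<le> 4 / real N" .
qed

lemma mart_request:
  assumes x: "x \<in> SS N k" and N: "N > 0" and k: "k \<ge> 1" and lam: "lam \<ge> 1" and i: "i \<le> k"
    and Mc: "real M \<le> real N * c0"
  shows "measure_pmf.expectation (iter_kernel M (request N k) x) (\<lambda>y. (frac N y i - Apow lam N k M (frac N x) i)^4)
           \<le> 4 * real M^2 * (exp (3 * c0) * 4 / real N)^4"
proof -
  define f where "f = (\<lambda>j y. Apow lam N k (M - j) (frac N y) i)"
  define b where "b = exp (3 * c0) * 4 / real N"
  have inv: "\<And>z. z \<in> SS N k \<Longrightarrow> set_pmf (request N k z) \<subseteq> SS N k"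
    using request_supp N k by blast
  have cond: "measure_pmf.expectation (request N k z) (f (Suc j)) = f j z" if j: "j < M" and z: "z \<in> SS N k" for j z
  proof -
    have "measure_pmf.expectation (request N k z) (f (Suc j))
        = Apow lam N k (M - Suc j) (\<lambda>l. measure_pmf.expectation (request N k z) (\<lambda>y. frac N y l)) i"
      unfolding f_def by (rule Apow_integral[OF request_fin[OF z N k]])
    also have "\<dots> = Apow lam N k (M - Suc j) (Aop lam N k (frac N z)) i"
      by (rule Apow_local[OF _ i]) (rule request_expect[OF z N k lam])
    also have "\<dots> = Apow lam N k (Suc (M - Suc j)) (frac N z) i" by (simp only: Apow_Suc_right)
    also have "Suc (M - Suc j) = M - j" using j by simp
    finally show ?thesis by (simp add: f_def)
  qed
  have bd: "\<bar>f (Suc j) y - f j z\<bar> \<le> b" if j: "j < M" and z: "z \<in> SS N k" and y: "y \<in> set_pmf (request N k z)" for j z y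
  proof -
    define m where "m = M - Suc j"
    have Mj: "M - j = Suc m" using j by (simp add: m_def)
    have fj: "f j z = Apow lam N k m (Aop lam N k (frac N z)) i"
      unfolding f_def Mj by (simp only: Apow_Suc_right)
    have "f (Suc j) y - f j z = Apow lam N k m (\<lambda>l. frac N y l - Aop lam N k (frac N z) l) i"
      unfolding fj by (simp add: f_def m_def Apow_diff)
    then have "\<bar>f (Suc j) y - f j z\<bar> \<le> vnorm k (Apow lam N k m (\<lambda>l. frac N y l - Aop lam N k (frac N z) l))"
      using vnorm_ge[OF i] by simp
    also have "\<dots> \<le> (1 + 3 / real N)^m * vnorm k (\<lambda>l. frac N y l - Aop lam N k (frac N z) l)"
      by (rule Apow_bound[OF k N lam])
    also have "\<dots> \<le> exp (3 * c0) * (4 / real N)"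
    proof (rule mult_mono)
      have "(1 + 3 / real N)^m \<le> (1 + 3 / real N)^M" by (rule power_increasing) (auto simp: m_def)
      also have "\<dots> \<le> exp (3 * c0)" by (rule pow_exp_bound[OF N Mc])
      finally show "(1 + 3 / real N)^m \<le> exp (3 * c0)" .
      show "vnorm k (\<lambda>l. frac N y l - Aop lam N k (frac N z) l) \<le> 4 / real N"
        by (rule request_step_bound[OF z N k lam y])
    qed (auto simp: vnorm_nonneg)
    finally show ?thesis by (simp add: b_def)
  qed
  have "measure_pmf.expectation (iter_kernel M (request N k) x) (\<lambda>y. (f M y - f 0 x)^4) \<le> 4 * real M^2 * b^4"
    using mart4[of "SS N k" "request N k" M f b x M, OF finite_SS inv cond bd x order_refl] by blast
  then show ?thesis by (simp add: f_def b_def)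
qed

lemma prob_mart_request:
  assumes x: "x \<in> SS N k" and N: "N > 0" and k: "k \<ge> 1" and lam: "lam \<ge> 1" and i: "i \<le> k"
    and Mc: "real M \<le> real N * c0" and c: "c > 0"
  shows "measure_pmf.prob (iter_kernel M (request N k) x) {y. c < \<bar>frac N y i - Apow lam N k M (frac N x) i\<bar>}
           \<le> 4 * real M^2 * (exp (3 * c0) * 4 / real N)^4 / c^4"
proof -
  let ?K = "iter_kernel M (request N k) x"
  let ?W = "\<lambda>y. (frac N y i - Apow lam N k M (frac N x) i)^4"
  have inv: "\<And>z. z \<in> SS N k \<Longrightarrow> set_pmf (request N k z) \<subseteq> SS N k"
    using request_supp N k by blast
  have fin: "finite (set_pmf ?K)" by (rule finite_subset[OF set_pmf_iter[OF inv x] finite_SS])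
  have "measure_pmf.prob ?K {y. c < \<bar>frac N y i - Apow lam N k M (frac N x) i\<bar>} \<le> measure_pmf.prob ?K {y \<in> space (measure_pmf ?K). ?W y \<ge> c^4}"
  proof (rule measure_pmf.finite_measure_mono)
    show "{y. c < \<bar>frac N y i - Apow lam N k M (frac N x) i\<bar>} \<subseteq> {y \<in> space (measure_pmf ?K). ?W y \<ge> c^4}"
    proof (safe, simp)
      fix y assume "c < \<bar>frac N y i - Apow lam N k M (frac N x) i\<bar>"
      then have "c^4 \<le> \<bar>frac N y i - Apow lam N k M (frac N x) i\<bar>^4" using c by (intro power_mono) auto
      then show "c^4 \<le> ?W y" by simp
    qed
  qed simp
  also have "\<dots> \<le> measure_pmf.expectation ?K ?W / c^4"
    by (rule integral_Markov_inequality_measure) (use c integrable_measure_pmf_finite[OF fin] in auto)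
  also have "\<dots> \<le> 4 * real M^2 * (exp (3 * c0) * 4 / real N)^4 / c^4"
    using c by (intro divide_right_mono mart_request[OF x N k lam i Mc]) auto
  finally show ?thesis .
qed



definition odesol :: "nat \<Rightarrow> nat \<Rightarrow> (real \<Rightarrow> nat \<Rightarrow> real) \<Rightarrow> bool" where
  "odesol lam k s \<longleftrightarrow> (\<forall>t\<ge>0. \<forall>i\<le>k. ((\<lambda>u. s u i) has_real_derivative ode_rhs lam k (s t) i) (at t within {0..}))"

lemma odesol_sub:
  assumes "odesol lam k s" "i \<le> k" "S \<subseteq> {0..}" "t \<in> S"
  shows "((\<lambda>u. s u i) has_real_derivative ode_rhs lam k (s t) i) (at t within S)"
  using assms unfolding odesol_def by (auto intro: DERIV_subset)

lemma ode_bounded: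
  assumes os: "odesol lam k s"
  shows "\<exists>B\<ge>0. \<forall>t\<in>{0..T1}. vnorm k (s t) \<le> B"
proof -
  have "\<exists>Bi. \<forall>t\<in>{0..T1}. \<bar>s t i\<bar> \<le> Bi" if i: "i \<le> k" for i
  proof -
    have "continuous_on {0..T1} (\<lambda>u. s u i)"
      by (rule DERIV_continuous_on) (rule odesol_sub[OF os i], auto)
    then have "compact ((\<lambda>u. s u i) ` {0..T1})" by (rule compact_continuous_image) simp
    then have "bounded ((\<lambda>u. s u i) ` {0..T1})" by (rule compact_imp_bounded)
    then obtain Bi where "\<forall>y\<in>(\<lambda>u. s u i) ` {0..T1}. norm y \<le> Bi" by (auto simp: bounded_iff)
    then show ?thesis by auto
  qed
  then obtain Bf where Bf: "\<And>i t. i \<le> k \<Longrightarrow> t \<in> {0..T1} \<Longrightarrow> \<bar>s t i\<bar> \<le> Bf i" by metis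
  define B where "B = (\<Sum>i\<le>k. \<bar>Bf i\<bar>)"
  have "vnorm k (s t) \<le> B" if t: "t \<in> {0..T1}" for t
  proof (rule vnorm_le)
    fix i assume i: "i \<le> k"
    have "\<bar>s t i\<bar> \<le> \<bar>Bf i\<bar>" using Bf[OF i t] by simp
    also have "\<dots> \<le> B" unfolding B_def using i by (intro member_le_sum) auto
    finally show "\<bar>s t i\<bar> \<le> B" .
  qed
  moreover have "B \<ge> 0" unfolding B_def by (simp add: sum_nonneg)
  ultimately show ?thesis by blast
qed

lemma ode_lipschitz:
  assumes os: "odesol lam k s" and k: "k \<ge> 1" and B: "\<And>t. t \<in> {0..T1} \<Longrightarrow> vnorm k (s t) \<le> B"
    and i: "i \<le> k" and u: "u \<in> {0..T1}" and t: "t \<in> {0..T1}"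
  shows "\<bar>s u i - s t i\<bar> \<le> 3 * real lam * B * \<bar>u - t\<bar>"
proof -
  have "norm (s u i - s t i) \<le> (3 * real lam * B) * norm (u - t)"
  proof (rule field_differentiable_bound[where S="{0..T1}" and f="\<lambda>u. s u i" and f'="\<lambda>z. ode_rhs lam k (s z) i"])
    show "\<And>z. z \<in> {0..T1} \<Longrightarrow> ((\<lambda>u. s u i) has_field_derivative ode_rhs lam k (s z) i) (at z within {0..T1})"
      by (rule odesol_sub[OF os i]) auto
    show "norm (ode_rhs lam k (s z) i) \<le> 3 * real lam * B" if z: "z \<in> {0..T1}" for z
    proof -
      have "\<bar>ode_rhs lam k (s z) i\<bar> \<le> 3 * real lam * vnorm k (s z)" by (rule ode_rhs_bound[OF k i])
      also have "\<dots> \<le> 3 * real lam * B" using B[OF z] by (intro mult_left_mono) auto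
      finally show ?thesis by simp
    qed
  qed (use u t in auto)
  then show ?thesis by simp
qed

lemma vnorm_lipschitz:
  assumes os: "odesol lam k s" and k: "k \<ge> 1" and B: "\<And>t. t \<in> {0..T1} \<Longrightarrow> vnorm k (s t) \<le> B"
    and u: "u \<in> {0..T1}" and t: "t \<in> {0..T1}"
  shows "vnorm k (\<lambda>l. s u l - s t l) \<le> 3 * real lam * B * \<bar>u - t\<bar>"
  by (rule vnorm_le) (rule ode_lipschitz[OF os k B _ u t])

lemma ode_trunc:
  assumes os: "odesol lam k s" and k: "k \<ge> 1" and B: "\<And>t. t \<in> {0..T1} \<Longrightarrow> vnorm k (s t) \<le> B"
    and i: "i \<le> k" and h: "h \<ge> 0" and t: "t \<ge> 0" and th: "t + h \<le> T1"
  shows "\<bar>s (t + h) i - s t i - h * ode_rhs lam k (s t) i\<bar> \<le> 9 * real lam ^ 2 * B * h ^ 2"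
proof -
  let ?c = "ode_rhs lam k (s t) i"
  have "norm ((s (t + h) i - (t + h) * ?c) - (s t i - t * ?c)) \<le> (9 * real lam ^ 2 * B * h) * norm ((t + h) - t)"
  proof (rule field_differentiable_bound[where S="{t..t+h}" and f="\<lambda>u. s u i - u * ?c" and f'="\<lambda>z. ode_rhs lam k (s z) i - ?c"])
    show "((\<lambda>u. s u i - u * ?c) has_field_derivative ode_rhs lam k (s z) i - ?c) (at z within {t..t+h})"
      if z: "z \<in> {t..t+h}" for z
      by (rule derivative_eq_intros odesol_sub[OF os i] | use z t in auto)+
    show "norm (ode_rhs lam k (s z) i - ?c) \<le> 9 * real lam ^ 2 * B * h" if z: "z \<in> {t..t+h}" for z
    proof -
      have zz: "z \<in> {0..T1}" "t \<in> {0..T1}" using z t th h by auto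
      have "ode_rhs lam k (s z) i - ?c = ode_rhs lam k (\<lambda>l. s z l - s t l) i" by (simp add: ode_rhs_diff)
      then have "\<bar>ode_rhs lam k (s z) i - ?c\<bar> \<le> 3 * real lam * vnorm k (\<lambda>l. s z l - s t l)"
        using ode_rhs_bound[OF k i] by simp
      also have "\<dots> \<le> 3 * real lam * (3 * real lam * B * \<bar>z - t\<bar>)"
        by (intro mult_left_mono vnorm_lipschitz[OF os k B zz]) auto
      also have "\<dots> \<le> 3 * real lam * (3 * real lam * B * h)"
      proof -
        have B0: "B \<ge> 0" using B[of 0] vnorm_nonneg[of k "s 0"] t th h by force
        show ?thesis using z B0 by (intro mult_left_mono) (auto simp: abs_le_iff)
      qed
      finally show ?thesis by (simp add: power2_eq_square algebra_simps)
    qed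
  qed (use h in auto)
  then show ?thesis using h by (simp add: power2_eq_square algebra_simps)
qed

lemma euler:
  assumes os: "odesol lam k s" and k: "k \<ge> 1" and lam: "lam \<ge> 1" and N: "N > 0"
    and B: "\<And>t. t \<in> {0..T1} \<Longrightarrow> vnorm k (s t) \<le> B"
    and m: "\<And>i. i \<le> k \<Longrightarrow> s 0 i = m i"
    and j: "real j / (real lam * real N) \<le> T1"
  shows "vnorm k (\<lambda>l. Apow lam N k j m l - s (real j / (real lam * real N)) l)
           \<le> (1 + 3 / real N)^j * (real j * (9 * real lam ^ 2 * B * (1 / (real lam * real N)) ^ 2))"
  using j
proof (induction j)
  case 0
  have "vnorm k (\<lambda>l. Apow lam N k 0 m l - s 0 l) \<le> 0" by (rule vnorm_le) (simp add: m)
  then show ?case by simp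
next
  case (Suc j)
  define h where "h = 1 / (real lam * real N)"
  define C where "C = 9 * real lam ^ 2 * B * h ^ 2"
  have h0: "h > 0" using lam N by (simp add: h_def)
  have tj: "real (Suc j) / (real lam * real N) = real j / (real lam * real N) + h" by (simp add: h_def add_divide_distrib)
  have jle: "real j / (real lam * real N) \<le> T1" using Suc.prems h0 tj by linarith
  let ?t = "real j / (real lam * real N)"
  have IH: "vnorm k (\<lambda>l. Apow lam N k j m l - s ?t l) \<le> (1 + 3 / real N)^j * (real j * C)"
    using Suc.IH[OF jle] by (simp add: C_def h_def)
  have t0: "?t \<ge> 0" by simp
  have C0: "C \<ge> 0"
  proof -
    have "B \<ge> 0" using B[of 0] vnorm_nonneg[of k "s 0"] t0 jle by force
    then show ?thesis by (simp add: C_def)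
  qed
  have "vnorm k (\<lambda>l. Apow lam N k (Suc j) m l - s (?t + h) l)
      \<le> vnorm k (\<lambda>l. Aop lam N k (\<lambda>l. Apow lam N k j m l - s ?t l) l) + C"
  proof (rule vnorm_le)
    fix l assume l: "l \<le> k"
    have e1: "Apow lam N k (Suc j) m l - s (?t + h) l
        = Aop lam N k (\<lambda>l. Apow lam N k j m l - s ?t l) l - (s (?t + h) l - s ?t l - h * ode_rhs lam k (s ?t) l)"
      by (simp add: Aop_apply ode_rhs_diff h_def algebra_simps diff_divide_distrib)
    have "\<bar>s (?t + h) l - s ?t l - h * ode_rhs lam k (s ?t) l\<bar> \<le> C"
      unfolding C_def by (rule ode_trunc[OF os k B l]) (use h0 t0 Suc.prems tj in auto)
    moreover have "\<bar>Aop lam N k (\<lambda>l. Apow lam N k j m l - s ?t l) l\<bar> \<le> vnorm k (Aop lam N k (\<lambda>l. Apow lam N k j m l - s ?t l))"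
      by (rule vnorm_ge[OF l])
    ultimately show "\<bar>Apow lam N k (Suc j) m l - s (?t + h) l\<bar> \<le> vnorm k (Aop lam N k (\<lambda>l. Apow lam N k j m l - s ?t l)) + C"
      unfolding e1 by linarith
  qed
  also have "\<dots> \<le> (1 + 3 / real N) * ((1 + 3 / real N)^j * (real j * C)) + C"
    using Aop_bound[OF k N lam] IH by (smt (verit) mult_left_mono of_nat_0_le_iff divide_nonneg_nonneg)
  also have "\<dots> \<le> (1 + 3 / real N)^Suc j * (real (Suc j) * C)"
  proof -
    define q where "q = 1 + 3 / real N"
    have "1 \<le> q^Suc j" unfolding q_def by (rule one_le_power) simp
    then have "C \<le> q^Suc j * C" using C0 by (simp add: mult_le_cancel_right1)
    moreover have "q^Suc j * (real (Suc j) * C) = q * (q^j * (real j * C)) + q^Suc j * C"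
      by (simp add: algebra_simps)
    ultimately show ?thesis unfolding q_def[symmetric] by linarith
  qed
  finally have X: "vnorm k (\<lambda>l. Apow lam N k (Suc j) m l - s (?t + h) l) \<le> (1 + 3 / real N)^Suc j * (real (Suc j) * C)" .
  show ?case using X unfolding tj C_def h_def .
qed



lemma good_path:
  assumes os: "odesol lam k s" and k: "k \<ge> 1" and lam: "lam \<ge> 1" and N: "N > 0"
    and B: "\<And>t. t \<in> {0..T+1} \<Longrightarrow> vnorm k (s t) \<le> B" and B0: "B \<ge> 0"
    and m: "\<And>i. i \<le> k \<Longrightarrow> s 0 i = m i" and T: "T > 0" and e: "\<epsilon> > 0"
    and p0: "vnorm k (\<lambda>i. frac N (p!0) i - m i) \<le> \<epsilon> / (4 * exp (3 * (real lam * T)))"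
    and pn: "\<And>n i. n \<le> nat \<lfloor>real N * T\<rfloor> \<Longrightarrow> i \<le> k \<Longrightarrow>
               \<bar>frac N (p!n) i - Apow lam N k (n * lam) (frac N (p!0)) i\<bar> \<le> \<epsilon> / 4"
    and Nbig: "(exp (3 * (real lam * T)) * 9 * real lam * B * T + 3 * real lam * B) / real N < \<epsilon> / 2"
  shows "(SUP t\<in>{0..T}. vnorm k (\<lambda>i. rescaled N p t i - s t i)) \<le> \<epsilon>"
proof (rule cSUP_least)
  show "{0..T} \<noteq> {}" using T by simp
  fix t assume t: "t \<in> {0..T}"
  define E0 where "E0 = exp (3 * (real lam * T))"
  have E0p: "E0 > 0" by (simp add: E0_def)
  define n where "n = nat \<lfloor>real N * t\<rfloor>"
  have Nt0: "0 \<le> real N * t" using t by simp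
  have rn: "real n = of_int \<lfloor>real N * t\<rfloor>" unfolding n_def using Nt0 by simp
  have n_le: "real n \<le> real N * t" unfolding rn by simp
  have n_ge: "real N * t - 1 < real n" unfolding rn by linarith
  have nT: "real n \<le> real N * T"
  proof -
    have "real N * t \<le> real N * T" using t by (intro mult_left_mono) auto
    then show ?thesis using n_le by linarith
  qed
  have nL: "n \<le> nat \<lfloor>real N * T\<rfloor>" unfolding n_def using t N
    by (intro nat_mono floor_mono mult_left_mono) auto
  have Nr: "real N > 0" using N by simp
  have tn: "\<bar>real n / real N - t\<bar> \<le> 1 / real N"
  proof -
    have "real n / real N \<le> t" using n_le Nr by (simp add: divide_le_eq mult.commute)
    moreover have "t - 1 / real N < real n / real N"
    proof -
      have "t - 1 / real N = (real N * t - 1) / real N" using Nr by (simp add: field_simps)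
      also have "\<dots> < real n / real N" using n_ge Nr by (rule divide_strict_right_mono)
      finally show ?thesis .
    qed
    ultimately show ?thesis by linarith
  qed
  have lamr: "real lam > 0" using lam by simp
  have Mc: "real (n * lam) \<le> real N * (real lam * T)"
  proof -
    have "real lam * real n \<le> real lam * (real N * T)" using nT lamr by (intro mult_left_mono) auto
    then show ?thesis by (simp add: algebra_simps)
  qed
  have powb: "(1 + 3 / real N) ^ (n * lam) \<le> E0" unfolding E0_def by (rule pow_exp_bound[OF N Mc])
  have tj: "real (n * lam) / (real lam * real N) = real n / real N" using lamr by simp
  have tjT: "real (n * lam) / (real lam * real N) \<le> T + 1"
  proof -
    have "1 / real N \<le> 1" using N by simp
    then show ?thesis unfolding tj using tn t by (simp add: abs_le_iff)
  qed
  have euler': "vnorm k (\<lambda>l. Apow lam N k (n * lam) m l - s (real n / real N) l)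
      \<le> E0 * 9 * real lam * B * T / real N"
  proof -
    have "vnorm k (\<lambda>l. Apow lam N k (n * lam) m l - s (real (n * lam) / (real lam * real N)) l)
          \<le> (1 + 3 / real N)^(n * lam) * (real (n * lam) * (9 * real lam ^ 2 * B * (1 / (real lam * real N)) ^ 2))"
      by (rule euler[OF os k lam N B m tjT])
    also have "\<dots> \<le> E0 * ((real N * (real lam * T)) * (9 * real lam ^ 2 * B * (1 / (real lam * real N)) ^ 2))"
      using B0 E0p T lamr Nr by (intro mult_mono powb Mc) auto
    also have "\<dots> = E0 * 9 * real lam * B * T / real N"
      using lamr Nr by (simp add: field_simps power2_eq_square)
    finally show ?thesis unfolding tj .
  qed
  have lip: "vnorm k (\<lambda>l. s (real n / real N) l - s t l) \<le> 3 * real lam * B / real N"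
  proof -
    have in1: "real n / real N \<in> {0..T+1}" using tjT tj by simp
    have in2: "t \<in> {0..T+1}" using t by simp
    have "vnorm k (\<lambda>l. s (real n / real N) l - s t l) \<le> 3 * real lam * B * \<bar>real n / real N - t\<bar>"
      by (rule vnorm_lipschitz[OF os k B in1 in2])
    also have "\<dots> \<le> 3 * real lam * B * (1 / real N)" using tn B0 by (intro mult_left_mono) auto
    finally show ?thesis by simp
  qed
  have init': "vnorm k (\<lambda>l. Apow lam N k (n * lam) (frac N (p!0)) l - Apow lam N k (n * lam) m l) \<le> \<epsilon> / 4"
  proof -
    have "vnorm k (\<lambda>l. Apow lam N k (n * lam) (frac N (p!0)) l - Apow lam N k (n * lam) m l)
        = vnorm k (Apow lam N k (n * lam) (\<lambda>l. frac N (p!0) l - m l))"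
      by (simp add: Apow_diff)
    also have "\<dots> \<le> (1 + 3 / real N)^(n * lam) * vnorm k (\<lambda>l. frac N (p!0) l - m l)"
      by (rule Apow_bound[OF k N lam])
    also have "\<dots> \<le> E0 * (\<epsilon> / (4 * E0))"
      using p0 powb by (intro mult_mono) (auto simp: E0_def vnorm_nonneg)
    also have "\<dots> = \<epsilon> / 4" using E0p by simp
    finally show ?thesis .
  qed
  show "vnorm k (\<lambda>i. rescaled N p t i - s t i) \<le> \<epsilon>"
  proof (rule vnorm_le)
    fix i assume i: "i \<le> k"
    have r: "rescaled N p t i = frac N (p!n) i" by (simp add: rescaled_def n_def)
    have a1: "\<bar>frac N (p!n) i - Apow lam N k (n * lam) (frac N (p!0)) i\<bar> \<le> \<epsilon> / 4" by (rule pn[OF nL i])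
    have a2: "\<bar>Apow lam N k (n * lam) (frac N (p!0)) i - Apow lam N k (n * lam) m i\<bar> \<le> \<epsilon> / 4"
      using vnorm_ge[OF i, of "\<lambda>l. Apow lam N k (n * lam) (frac N (p!0)) l - Apow lam N k (n * lam) m l"] init' by simp
    have a3: "\<bar>Apow lam N k (n * lam) m i - s (real n / real N) i\<bar> \<le> E0 * 9 * real lam * B * T / real N"
      using vnorm_ge[OF i, of "\<lambda>l. Apow lam N k (n * lam) m l - s (real n / real N) l"] euler' by simp
    have a4: "\<bar>s (real n / real N) i - s t i\<bar> \<le> 3 * real lam * B / real N"
      using vnorm_ge[OF i, of "\<lambda>l. s (real n / real N) l - s t l"] lip by simp
    have sum: "E0 * 9 * real lam * B * T / real N + 3 * real lam * B / real N < \<epsilon> / 2"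
      using Nbig unfolding E0_def by (simp add: add_divide_distrib)
    show "\<bar>rescaled N p t i - s t i\<bar> \<le> \<epsilon>" unfolding r using a1 a2 a3 a4 sum by linarith
  qed
qed



theorem theorem4:
  fixes k lam :: nat and m :: "nat \<Rightarrow> real" and s :: "real \<Rightarrow> nat \<Rightarrow> real"
    and mu :: "nat \<Rightarrow> nat list pmf"
  assumes k: "k \<ge> 1" and lam: "lam \<ge> 1"
    and m_prob: "\<forall>i\<le>k. m i \<ge> 0" "(\<Sum>i\<le>k. m i) = 1"
    and mu_valid: "\<forall>N>0. \<forall>xs\<in>set_pmf (mu N). length xs = N \<and> (\<forall>x\<in>set xs. x \<le> k)"
    and init: "\<forall>\<epsilon>>0. ((\<lambda>N. measure_pmf.prob (mu N)
                  {xs. vnorm k (\<lambda>i. frac N xs i - m i) > \<epsilon>}) \<longlonglongrightarrow> 0)"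
    and s0: "\<forall>i\<le>k. s 0 i = m i"
    and ode: "\<forall>t\<ge>0. \<forall>i\<le>k.
                ((\<lambda>u. s u i) has_real_derivative ode_rhs lam k (s t) i) (at t within {0..})"
  shows "\<forall>T>0. \<forall>\<epsilon>>0. ((\<lambda>N. measure_pmf.prob
            (path_pmf (slot lam N k) (mu N) (nat \<lfloor>real N * T\<rfloor>))
            {p. (SUP t\<in>{0..T}. vnorm k (\<lambda>i. rescaled N p t i - s t i)) > \<epsilon>}) \<longlonglongrightarrow> 0)"
proof (intro allI impI)
  fix T \<epsilon> :: real assume T: "T > 0" and e: "\<epsilon> > 0"
  have os: "odesol lam k s" using ode by (simp add: odesol_def)
  obtain B where B0: "B \<ge> 0" and B: "\<And>t. t \<in> {0..T+1} \<Longrightarrow> vnorm k (s t) \<le> B"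
    using ode_bounded[OF os, of "T+1"] by blast
  have m: "\<And>i. i \<le> k \<Longrightarrow> s 0 i = m i" using s0 by simp
  define E0 where "E0 = exp (3 * (real lam * T))"
  have E0p: "E0 > 0" by (simp add: E0_def)
  define \<delta> where "\<delta> = \<epsilon> / (4 * E0)"
  have dp: "\<delta> > 0" using e E0p by (simp add: \<delta>_def)
  define c where "c = \<epsilon> / 4"
  have cp: "c > 0" using e by (simp add: c_def)
  define Q where "Q = 4 * (real lam * T)^2 * (4 * E0)^4 / c^4"
  have Q0: "Q \<ge> 0" by (simp add: Q_def)
  define K2 where "K2 = (T + 1) * (real k + 1) * Q"
  define D where "D = E0 * 9 * real lam * B * T + 3 * real lam * B"
  have D0: "D \<ge> 0" using E0p B0 T by (simp add: D_def)
  define N0 where "N0 = nat \<lceil>2 * D / \<epsilon>\<rceil> + 1"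
  define g where "g N = measure_pmf.prob (mu N) {xs. vnorm k (\<lambda>i. frac N xs i - m i) > \<delta>} + K2 / real N" for N
  have glim: "g \<longlonglongrightarrow> 0"
    unfolding g_def using init dp by (auto intro!: tendsto_add_zero lim_const_over_n)
  define P where "P N = measure_pmf.prob (path_pmf (slot lam N k) (mu N) (nat \<lfloor>real N * T\<rfloor>))
            {p. (SUP t\<in>{0..T}. vnorm k (\<lambda>i. rescaled N p t i - s t i)) > \<epsilon>}" for N
  have bound: "P N \<le> g N" if NN0: "N \<ge> N0" for N
  proof -
    have N: "N > 0" using NN0 by (simp add: N0_def)
    have Nr: "real N > 0" using N by simp
    have Nr1: "real N \<ge> 1" using N by simp
    have Nbig: "(exp (3 * (real lam * T)) * 9 * real lam * B * T + 3 * real lam * B) / real N < \<epsilon> / 2"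
    proof -
      have "2 * D / \<epsilon> < real N"
      proof -
        have "2 * D / \<epsilon> \<le> real (nat \<lceil>2 * D / \<epsilon>\<rceil>)" by linarith
        also have "\<dots> < real N" using NN0 by (simp add: N0_def)
        finally show ?thesis .
      qed
      then have "2 * D < real N * \<epsilon>" using e by (simp add: divide_less_eq)
      then have "D / real N < \<epsilon> / 2" using Nr by (simp add: field_simps)
      then show ?thesis by (simp add: D_def E0_def)
    qed
    define L where "L = nat \<lfloor>real N * T\<rfloor>"
    have Lr: "real L \<le> real N * T" unfolding L_def using T Nr by simp
    let ?path = "path_pmf (slot lam N k) (mu N) L"
    define A0 where "A0 = {p :: nat list list. \<delta> < vnorm k (\<lambda>i. frac N (p!0) i - m i)}"
    define A where "A = (\<lambda>(n, i). {p :: nat list list. c < \<bar>frac N (p!n) i - Apow lam N k (n * lam) (frac N (p!0)) i\<bar>})"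
    have sub: "{p. (SUP t\<in>{0..T}. vnorm k (\<lambda>i. rescaled N p t i - s t i)) > \<epsilon>} \<subseteq> A0 \<union> (\<Union>x\<in>{..L}\<times>{..k}. A x)"
    proof
      fix p assume p: "p \<in> {p. (SUP t\<in>{0..T}. vnorm k (\<lambda>i. rescaled N p t i - s t i)) > \<epsilon>}"
      show "p \<in> A0 \<union> (\<Union>x\<in>{..L}\<times>{..k}. A x)"
      proof (rule ccontr)
        assume "p \<notin> A0 \<union> (\<Union>x\<in>{..L}\<times>{..k}. A x)"
        then have p0: "vnorm k (\<lambda>i. frac N (p!0) i - m i) \<le> \<epsilon> / (4 * exp (3 * (real lam * T)))"
          and pn: "\<And>n i. n \<le> L \<Longrightarrow> i \<le> k \<Longrightarrow>
               \<bar>frac N (p!n) i - Apow lam N k (n * lam) (frac N (p!0)) i\<bar> \<le> \<epsilon> / 4"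
          by (auto simp: A0_def A_def \<delta>_def E0_def c_def not_less)
        have "(SUP t\<in>{0..T}. vnorm k (\<lambda>i. rescaled N p t i - s t i)) \<le> \<epsilon>"
          by (rule good_path[OF os k lam N B B0 m T e p0 pn[unfolded L_def] Nbig])
        then show False using p by simp
      qed
    qed
    have PA: "measure_pmf.prob ?path (A x) \<le> Q / real N ^ 2" if x: "x \<in> {..L}\<times>{..k}" for x
    proof -
      obtain n i where xe: "x = (n, i)" and nL: "n \<le> L" and i: "i \<le> k" using x by auto
      have Mc: "real (n * lam) \<le> real N * (real lam * T)"
      proof -
        have "real lam * real n \<le> real lam * (real N * T)" using nL Lr by (intro mult_left_mono) auto
        then show ?thesis by (simp add: algebra_simps)
      qed
      have Mb: "4 * real (n * lam)^2 * (exp (3 * (real lam * T)) * 4 / real N)^4 / c^4 \<le> Q / real N ^ 2"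
      proof -
        have "real (n * lam)^2 \<le> (real N * (real lam * T))^2"
          by (rule power_mono[OF Mc]) simp
        then have "4 * real (n * lam)^2 * (E0 * 4 / real N)^4 / c^4 \<le> 4 * (real N * (real lam * T))^2 * (E0 * 4 / real N)^4 / c^4"
          using cp by (intro divide_right_mono mult_right_mono mult_left_mono) auto
        also have "\<dots> = Q / real N ^ 2" unfolding Q_def using Nr cp by (simp add: field_simps power2_eq_square eval_nat_numeral)
        finally show ?thesis by (simp add: E0_def)
      qed
      have "measure_pmf.prob ?path (A x) = measure_pmf.prob ?path {p. c < \<bar>frac N (p!n) i - Apow lam N k (n * lam) (frac N (p!0)) i\<bar>}"
        by (simp add: A_def xe)
      also have "\<dots> \<le> Q / real N ^ 2"
      proof (rule prob_path_pair_le[OF nL])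
        show "0 \<le> Q / real N ^ 2" using Q0 by simp
        fix x assume x: "x \<in> set_pmf (mu N)"
        have xS: "x \<in> SS N k" using mu_valid N x by (auto simp: SS_def)
        have "iter_kernel n (slot lam N k) x = iter_kernel (n * lam) (request N k) x"
          by (simp add: slot_def iter_mult)
        then have "measure_pmf.prob (iter_kernel n (slot lam N k) x) {y. c < \<bar>frac N y i - Apow lam N k (n * lam) (frac N x) i\<bar>}
           \<le> 4 * real (n * lam)^2 * (exp (3 * (real lam * T)) * 4 / real N)^4 / c^4"
          using prob_mart_request[OF xS N k lam i Mc cp] by simp
        then show "measure_pmf.prob (iter_kernel n (slot lam N k) x) {y. c < \<bar>frac N y i - Apow lam N k (n * lam) (frac N x) i\<bar>}
           \<le> Q / real N ^ 2" using Mb by linarith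
      qed
      finally show ?thesis .
    qed
    have "P N \<le> measure_pmf.prob ?path (A0 \<union> (\<Union>x\<in>{..L}\<times>{..k}. A x))"
      unfolding P_def L_def[symmetric] by (rule measure_pmf.finite_measure_mono[OF sub]) simp
    also have "\<dots> \<le> measure_pmf.prob ?path A0 + measure_pmf.prob ?path (\<Union>x\<in>{..L}\<times>{..k}. A x)"
      by (rule measure_Un_le) auto
    also have "measure_pmf.prob ?path (\<Union>x\<in>{..L}\<times>{..k}. A x) \<le> (\<Sum>x\<in>{..L}\<times>{..k}. measure_pmf.prob ?path (A x))"
      by (rule measure_pmf.finite_measure_subadditive_finite) auto
    also have "\<dots> \<le> real (card ({..L}\<times>{..k})) * (Q / real N ^ 2)"
      by (rule sum_bounded_above) (rule PA)
    also have "\<dots> \<le> K2 / real N"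
    proof -
      have c: "real (card ({..L}\<times>{..k})) = (real L + 1) * (real k + 1)" by (simp add: card_cartesian_product algebra_simps)
      have "real L + 1 \<le> real N * (T + 1)" using Lr Nr1 by (simp add: algebra_simps)
      then have "(real L + 1) * (real k + 1) * (Q / real N ^ 2) \<le> (real N * (T + 1)) * (real k + 1) * (Q / real N ^ 2)"
        using Q0 by (intro mult_right_mono) auto
      also have "\<dots> = K2 / real N" unfolding K2_def using Nr by (simp add: field_simps power2_eq_square)
      finally show ?thesis unfolding c .
    qed
    also have "measure_pmf.prob ?path A0 = measure_pmf.prob (mu N) {xs. vnorm k (\<lambda>i. frac N xs i - m i) > \<delta>}"
      unfolding A0_def by (rule prob_path_0)
    finally show ?thesis by (simp add: g_def)
  qed
  have P0: "P N \<ge> 0" for N by (simp add: P_def)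
  show "P \<longlonglongrightarrow> 0"
  proof (rule tendsto_sandwich[of "\<lambda>_. 0" P sequentially g])
    show "\<forall>\<^sub>F n in sequentially. 0 \<le> P n" using P0 by simp
    show "\<forall>\<^sub>F n in sequentially. P n \<le> g n" using bound by (auto simp: eventually_sequentially)
  qed (use glim in auto)
qed

end
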